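(* Let $p\in(1,2)$, $t\in(2p-2,p)$, $\delta,\varrho>0$, $c_r\ge c_l>0$, $C_D>c_D>1$, and set $\mu:=(\bar a^2\bar r^{-p})^{\frac1{2-p}}$, $\nu:=(\bar a^{-1}\bar r)^{\frac{2p}{2-p}}$ (componentwise). Let $x\in\ell^p_{\bar r}$ with $x\in w^t_{\mu,\nu}$ and $\|x\|_{w^t_{\mu,\nu}}\le\varrho$, let $g^\delta\in\mathbb Y$ with $\|g^\delta-Ax\|_{\mathbb Y}\le\delta$, $\alpha>0$ and $\hat x_\alpha\in R_\alpha(g^\delta)$. There is a constant $C>0$ independent of $x,\delta,\varrho$ such that whenever either $$c_l\varrho^{-\frac{t(2-p)}{2-t}}\delta^{\frac{2(2-p)}{2-t}}\le\alpha\le c_r\varrho^{-\frac{t(2-p)}{2-t}}\delta^{\frac{2(2-p)}{2-t}}\quad\text{or}\quad c_D\delta\le\|g^\delta-A\hat x_\alpha\|_{\mathbb Y}\le C_D\delta,$$ then $\|x-\hat x_\alpha\|_{\ell^p_{\bar r}}\le C\varrho^{\frac{t(2-p)}{p(2-t)}}\delta^{\frac{2(p-t)}{p(2-t)}}$.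
   Context: $\Lambda$ is a countable index set. For a sequence $\bar\omega=(\bar\omega_j)_{j\in\Lambda}$ of positive reals and $p\in(0,\infty)$, $\ell^p_{\bar\omega}:=\{x\in\mathbb R^\Lambda:\|x\|_{\ell^p_{\bar\omega}}<\infty\}$ with $\|x\|_{\ell^p_{\bar\omega}}^p:=\sum_{j\in\Lambda}\bar\omega_j^p|x_j|^p$. For positive sequences $\mu,\nu$ and $t\in(0,\infty)$ the weighted weak space $w^t_{\mu,\nu}:=\{x\in\mathbb R^\Lambda:\|x\|_{w^t_{\mu,\nu}}<\infty\}$ with $\|x\|^t_{w^t_{\mu,\nu}}:=\sup_{\tau>0}\tau^t\sum_{j\in\Lambda}\nu_j\mathbf 1_{\{\mu_j|x_j|>\tau\}}$. Let $\bar a,\bar r$ be sequences of positive reals with $(\bar a_j/\bar r_j)_j$ bounded, so $\ell^p_{\bar r}\subset\ell^2_{\bar a}$ continuously for $p\in(1,2)$. $\mathbb Y$ is a real Hilbert space and $A:\ell^2_{\bar a}\to\mathbb Y$ is bounded linear with $\frac1M\|x\|_{\ell^2_{\bar a}}\le\|Ax\|_{\mathbb Y}\le M\|x\|_{\ell^2_{\bar a}}$ for some $M\ge1$. Penalty $\mathcal R(x):=\frac1p\|x\|_{\ell^p_{\bar r}}^p$ on $\mathbb X=\ell^p_{\bar r}$; $R_\alpha(g):=\operatorname{argmin}_{x\in\ell^p_{\bar r}}\big(\frac1{2\alpha}\|g-Ax\|_{\mathbb Y}^2+\mathcal R(x)\big)$. *)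

theory Defs
  imports "HOL-Analysis.Analysis"
begin

definition lp_space :: "real \<Rightarrow> ('j \<Rightarrow> real) \<Rightarrow> ('j \<Rightarrow> real) set" where
  "lp_space p w = {x. (\<lambda>j. (w j * \<bar>x j\<bar>) powr p) summable_on UNIV}"

definition lp_norm :: "real \<Rightarrow> ('j \<Rightarrow> real) \<Rightarrow> ('j \<Rightarrow> real) \<Rightarrow> real" where
  "lp_norm p w x = (\<Sum>\<^sub>\<infinity>j. (w j * \<bar>x j\<bar>) powr p) powr (1 / p)"

definition weak_norm_pow ::
  "real \<Rightarrow> ('j \<Rightarrow> real) \<Rightarrow> ('j \<Rightarrow> real) \<Rightarrow> ('j \<Rightarrow> real) \<Rightarrow> ennreal" where
  "weak_norm_pow t \<mu> \<nu> x =
     (SUP \<tau>\<in>{0<..}. ennreal (\<tau> powr t) *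
        (\<integral>\<^sup>+ j. ennreal (\<nu> j * indicator {j. \<mu> j * \<bar>x j\<bar> > \<tau>} j) \<partial>count_space UNIV))"

definition weak_space :: "real \<Rightarrow> ('j \<Rightarrow> real) \<Rightarrow> ('j \<Rightarrow> real) \<Rightarrow> ('j \<Rightarrow> real) set" where
  "weak_space t \<mu> \<nu> = {x. weak_norm_pow t \<mu> \<nu> x < \<infinity>}"

definition tikhonov_minimizers ::
  "(('j \<Rightarrow> real) \<Rightarrow> 'y::real_normed_vector) \<Rightarrow> real \<Rightarrow> ('j \<Rightarrow> real) \<Rightarrow> real \<Rightarrow> 'y
     \<Rightarrow> ('j \<Rightarrow> real) set" where
  "tikhonov_minimizers A p r \<alpha> g =
     {x \<in> lp_space p r. \<forall>z \<in> lp_space p r.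
        (1 / (2 * \<alpha>)) * (norm (g - A x))\<^sup>2 + (1 / p) * (lp_norm p r x) powr p
        \<le> (1 / (2 * \<alpha>)) * (norm (g - A z))\<^sup>2 + (1 / p) * (lp_norm p r z) powr p}"

end

theory Submission
  imports Defs
begin

lemma pos_eq_by_ln:
  fixes A B :: real
  assumes "A > 0" "B > 0" "ln A = ln B" shows "A = B"
  using assms by simp

lemma id_Q1:
  fixes a r y p :: real
  assumes a: "a > 0" and r: "r > 0" and y: "y \<ge> 0" and p: "p < 2"
  shows "(r / a) powr (2 * p / (2 - p)) * ((a ^ 2 * r powr (- p)) powr (1 / (2 - p)) * y) powr p
         = (r * y) powr p"
proof (cases "y = 0")
  case True then show ?thesis by simp
next
  case False
  then have y: "y > 0" using y by simp
  have sq: "p * p + 4 - p * 4 > 0" proof - have "(2-p)*(2-p) > 0" using p by simp then show ?thesis by (simp add: algebra_simps) qed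
  show ?thesis
  proof (rule pos_eq_by_ln)
    show "ln ((r / a) powr (2 * p / (2 - p)) * ((a ^ 2 * r powr (- p)) powr (1 / (2 - p)) * y) powr p)
        = ln ((r * y) powr p)"
      using a r y p sq by (simp add: ln_mult ln_div ln_realpow field_simps)
  qed (use a r y in auto)
qed

lemma id_Q4:
  fixes a r y p :: real
  assumes a: "a > 0" and r: "r > 0" and y: "y \<ge> 0" and p: "1 < p" "p < 2"
  shows "((r * y) powr (p - 1) * r / a)^2
       = (r / a) powr (2 * p / (2 - p)) * ((a ^ 2 * r powr (- p)) powr (1 / (2 - p)) * y) powr (2*p - 2)"
proof (cases "y = 0")
  case True then show ?thesis using p by simp
next
  case False
  then have y: "y > 0" using y by simp
  have sq: "p * p + 4 - p * 4 > 0" proof - have "(2-p)*(2-p) > 0" using p by simp then show ?thesis by (simp add: algebra_simps) qed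
  show ?thesis
  proof (rule pos_eq_by_ln)
    show "ln (((r * y) powr (p - 1) * r / a)^2) = ln ((r / a) powr (2 * p / (2 - p)) * ((a ^ 2 * r powr (- p)) powr (1 / (2 - p)) * y) powr (2*p - 2))"
      using a r y p sq by (simp add: ln_mult ln_div ln_realpow field_simps)
  qed (use a r y in auto)
qed

lemma id_Q5:
  fixes a r y p \<tau> :: real
  assumes a: "a > 0" and r: "r > 0" and y: "y > 0" and p: "1 < p" "p < 2" and tau: "\<tau> > 0"
  shows "(\<tau> powr (p - 2) * (a * y) powr 2) powr (p / 2) * (\<tau> powr p * (r / a) powr (2 * p / (2 - p))) powr ((2 - p) / 2)
       = (r * y) powr p"
proof (rule pos_eq_by_ln)
  show "ln ((\<tau> powr (p - 2) * (a * y) powr 2) powr (p / 2) * (\<tau> powr p * (r / a) powr (2 * p / (2 - p))) powr ((2 - p) / 2)) = ln ((r * y) powr p)"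
    using a r y p tau by (simp add: ln_mult ln_div ln_realpow field_simps)
qed (use a r y tau in auto)


lemma tangent_powr:
  fixes p q v :: real
  assumes p: "1 \<le> p" and v: "0 \<le> v" "v \<le> q"
  shows "q powr p - v powr p \<le> p * q powr (p - 1) * (q - v)"
proof (cases "v = 0")
  case True
  show ?thesis
  proof (cases "q = 0")
    case True then show ?thesis using \<open>v = 0\<close> by simp
  next
    case False
    then have q: "q > 0" using v by simp
    have "q powr (p - 1) * q = q powr p" using q by (simp add: powr_diff)
    then have "p * q powr (p - 1) * (q - v) = p * q powr p" using True by (simp add: mult.assoc)
    moreover have "q powr p \<le> p * q powr p" using p q by (simp add: mult_le_cancel_right1)
    moreover have "v powr p = 0" using True by simp
    ultimately show ?thesis by linarith
  qed
next
  case False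
  then have v0: "v > 0" using v by simp
  then have q: "q > 0" using v by simp
  have "(\<lambda>x. x powr p) v - (\<lambda>x. x powr p) q \<ge> (p * q powr (p - 1)) * (v - q)"
  proof (rule convex_on_imp_above_tangent[where A = "{0<..}"])
    show "convex_on {0<..} (\<lambda>x. x powr p)" using powr_convex p by simp
    show "connected {0::real<..}" by simp
    show "q \<in> interior {0<..}" using q by (simp add: interior_open)
    show "v \<in> {0<..}" using v0 by simp
    show "((\<lambda>x. x powr p) has_field_derivative p * q powr (p - 1)) (at q within {0<..})"
      using q by (auto intro!: derivative_eq_intros simp: powr_diff field_simps)
  qed
  then show ?thesis by (simp add: algebra_simps)
qed

lemma amgm2:
  fixes X Y l :: real
  assumes "l > 0"
  shows "X * Y \<le> l / 2 * X^2 + 1 / (2 * l) * Y^2"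
proof -
  have "l / 2 * X^2 + 1 / (2 * l) * Y^2 - X * Y = (l * X - Y)^2 / (2 * l)"
    using assms by (simp add: field_simps power2_eq_square)
  moreover have "(l * X - Y)^2 / (2 * l) \<ge> 0" using assms by simp
  ultimately show ?thesis by linarith
qed

lemma young_pt:
  fixes a r y p \<tau> \<nu> :: real
  assumes a: "a > 0" and r: "r > 0" and y: "y \<ge> 0" and p: "1 < p" "p < 2" and tau: "\<tau> > 0"
    and nu: "\<nu> = (r / a) powr (2 * p / (2 - p))"
  shows "(r * y) powr p \<le> p / 2 * \<tau> powr (p - 2) * (a * y) powr 2 + (2 - p) / 2 * \<tau> powr p * \<nu>"
proof (cases "y = 0")
  case True
  then show ?thesis using p nu by simp
next
  case False
  then have y: "y > 0" using y by simp
  have "(\<tau> powr (p - 2) * (a * y) powr 2) powr (p / 2) * (\<tau> powr p * \<nu>) powr ((2 - p) / 2)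
     \<le> p / 2 * (\<tau> powr (p - 2) * (a * y) powr 2) + (2 - p) / 2 * (\<tau> powr p * \<nu>)"
    by (rule Youngs_inequality_0) (use p a y tau r nu in \<open>auto simp: field_simps\<close>)
  then show ?thesis using id_Q5[OF a r y p tau] nu by (simp add: algebra_simps)
qed

lemma pow2_mul:
  fixes \<tau> s :: real assumes "\<tau> > 0"
  shows "(\<tau> * 2^k) powr s = \<tau> powr s * (2 powr s)^k"
proof -
  have "(2::real)^k = 2 powr (real k)" by (simp add: powr_realpow)
  then have "(\<tau> * 2^k) powr s = \<tau> powr s * 2 powr (real k * s)"
    using assms by (simp add: powr_mult powr_powr)
  also have "2 powr (real k * s) = (2 powr s)^k" by (simp add: powr_power)
  finally show ?thesis .
qed

lemma pow2_div:
  fixes \<tau> s :: real assumes "\<tau> > 0"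
  shows "(\<tau> / 2^k) powr s = \<tau> powr s * (2 powr (- s))^k"
proof -
  have "(2::real)^k = 2 powr (real k)" by (simp add: powr_realpow)
  then have "(\<tau> / 2^k) powr s = \<tau> powr s / (2 powr (real k)) powr s"
    using assms by (simp add: powr_divide)
  also have "\<dots> = \<tau> powr s * 2 powr (real k * (- s))"
    by (simp add: powr_powr powr_minus divide_inverse)
  also have "2 powr (real k * (-s)) = (2 powr (-s))^k" by (simp add: powr_power)
  finally show ?thesis .
qed

lemma exists_dyadic_below:
  fixes h \<tau> :: real assumes "0 < h" "h \<le> \<tau>"
  shows "\<exists>m::nat. \<tau> / 2^(m+1) < h \<and> h \<le> \<tau> / 2^m"
proof -
  define P where "P n \<longleftrightarrow> \<tau> / 2^(n+1) < h" for n :: nat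
  obtain n where n: "\<tau> / h < 2^n" using real_arch_pow[of 2 "\<tau> / h"] by auto
  have "P n"
  proof -
    have "\<tau> < h * 2^n" using n assms by (simp add: field_simps)
    then have "\<tau> < h * 2^(n+1)" using assms by (smt (verit) mult_left_mono power_increasing_iff one_le_numeral le_add1 power_increasing)
    then show ?thesis unfolding P_def by (simp add: field_simps)
  qed
  define m where "m = (LEAST n. P n)"
  have Pm: "P m" unfolding m_def by (rule LeastI) (rule \<open>P n\<close>)
  have "h \<le> \<tau> / 2^m"
  proof (cases m)
    case 0 then show ?thesis using assms by simp
  next
    case (Suc k)
    then have "\<not> P k" unfolding m_def by (metis Suc_n_not_le_n Least_le)
    then show ?thesis using Suc unfolding P_def by simp
  qed
  then show ?thesis using Pm unfolding P_def by blast
qed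

lemma exists_dyadic_above:
  fixes h \<tau> :: real assumes "0 < \<tau>" "\<tau> < h"
  shows "\<exists>m::nat. \<tau> * 2^m < h \<and> h \<le> \<tau> * 2^(m+1)"
proof -
  define P where "P n \<longleftrightarrow> h \<le> \<tau> * 2^(n+1)" for n :: nat
  obtain n where n: "h / \<tau> < 2^n" using real_arch_pow[of 2 "h / \<tau>"] by auto
  have "P n"
  proof -
    have "h < \<tau> * 2^n" using n assms by (simp add: field_simps)
    also have "\<dots> \<le> \<tau> * 2^(n+1)" using assms by simp
    finally show ?thesis unfolding P_def by simp
  qed
  define m where "m = (LEAST n. P n)"
  have Pm: "P m" unfolding m_def by (rule LeastI) (rule \<open>P n\<close>)
  have "\<tau> * 2^m < h"
  proof (cases m)
    case 0 then show ?thesis using assms by simp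
  next
    case (Suc k)
    then have "\<not> P k" unfolding m_def by (metis Suc_n_not_le_n Least_le)
    then show ?thesis using Suc unfolding P_def by simp
  qed
  then show ?thesis using Pm unfolding P_def by blast
qed


lemma dyadic_small:
  fixes h \<nu> :: "'j \<Rightarrow> real" and R \<tau> t p :: real
  assumes h: "\<And>j. h j \<ge> 0" and nu: "\<And>j. \<nu> j \<ge> 0" and tau: "\<tau> > 0" and t: "0 < t" "t < p"
    and W: "\<And>\<tau>' F. \<tau>' > 0 \<Longrightarrow> finite F \<Longrightarrow> (\<Sum>j\<in>F. if h j > \<tau>' then \<nu> j else 0) \<le> R * \<tau>' powr (-t)"
    and F: "finite F"
  shows "(\<Sum>j\<in>F. if h j \<le> \<tau> then \<nu> j * h j powr p else 0)
         \<le> 2 powr t / (1 - 2 powr (t - p)) * R * \<tau> powr (p - t)"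
proof -
  define d where "d = 2 powr (- p)"
  have d: "0 \<le> d" "d < 1" unfolding d_def using t
    by (auto intro!: powr_less_one) 
  define g where "g k j = (if h j > \<tau> / 2^(k+1) then \<nu> j * (\<tau> powr p * d^k) else 0)" for k :: nat and j
  have g_nonneg: "g k j \<ge> 0" for k j unfolding g_def d_def using nu by auto
  have g_sum: "summable (\<lambda>k. g k j)" for j
  proof (rule summable_comparison_test')
    show "summable (\<lambda>k. \<nu> j * \<tau> powr p * d^k)"
      using d by (intro summable_mult summable_geometric) auto
    show "norm (g k j) \<le> \<nu> j * \<tau> powr p * d^k" for k
    proof -
      have "0 \<le> \<nu> j * (\<tau> powr p * d^k)" using nu[of j] d by simp
      then show ?thesis using g_nonneg[of k j] unfolding g_def by (auto simp: mult.assoc)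
    qed
  qed
  have pt: "(if h j \<le> \<tau> then \<nu> j * h j powr p else 0) \<le> (\<Sum>k. g k j)" for j
  proof (cases "h j \<le> \<tau> \<and> h j > 0")
    case True
    then obtain m where m: "\<tau> / 2^(m+1) < h j" "h j \<le> \<tau> / 2^m"
      using exists_dyadic_below by blast
    have "h j powr p \<le> (\<tau> / 2^m) powr p" using m True t by (intro powr_mono2) auto
    also have "\<dots> = \<tau> powr p * d^m" unfolding d_def using tau by (rule pow2_div)
    finally have "\<nu> j * h j powr p \<le> g m j" unfolding g_def using m nu[of j] by (simp add: mult_left_mono)
    also have "g m j \<le> (\<Sum>k. g k j)"
      using sum_le_suminf[OF g_sum, of "{m}"] g_nonneg by simp
    finally show ?thesis using True by simp
  next
    case False
    then have "(if h j \<le> \<tau> then \<nu> j * h j powr p else 0) = 0"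
      using h[of j] by auto
    then show ?thesis using suminf_nonneg[OF g_sum g_nonneg] by simp
  qed
  define b where "b k = 2 powr t * R * \<tau> powr (p - t) * (2 powr (t - p))^k" for k :: nat
  have q1: "2 powr (t - p) < 1" using t by (auto intro!: powr_less_one)
  have b_sum: "summable b" unfolding b_def using q1
    by (intro summable_mult summable_geometric) auto
  have sum_b: "(\<Sum>k. b k) = 2 powr t / (1 - 2 powr (t - p)) * R * \<tau> powr (p - t)"
    unfolding b_def using q1 by (simp add: suminf_mult suminf_geometric field_simps)
  have gb: "(\<Sum>j\<in>F. g k j) \<le> b k" for k
  proof -
    have "(\<Sum>j\<in>F. g k j) = \<tau> powr p * d^k * (\<Sum>j\<in>F. if h j > \<tau> / 2^(k+1) then \<nu> j else 0)"
      unfolding g_def sum_distrib_left by (intro sum.cong) (auto simp: mult_ac)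
    also have "\<dots> \<le> \<tau> powr p * d^k * (R * (\<tau> / 2^(k+1)) powr (-t))"
      using W[of "\<tau> / 2^(k+1)" F] tau F d by (intro mult_left_mono) auto
    also have "(\<tau> / 2^(k+1)) powr (-t) = \<tau> powr (-t) * (2 powr t)^(k+1)"
      using pow2_div[OF tau, of "k+1" "-t"] by simp
    also have "\<tau> powr p * d^k * (R * (\<tau> powr (-t) * (2 powr t)^(k+1))) = b k"
    proof -
      have "d^k * (2 powr t)^k = (2 powr (t - p))^k"
        unfolding d_def by (simp add: power_mult_distrib[symmetric] powr_add[symmetric])
      moreover have "\<tau> powr p * \<tau> powr (-t) = \<tau> powr (p - t)" by (simp add: powr_add[symmetric])
      ultimately show ?thesis unfolding b_def
        by (simp add: algebra_simps) (metis (no_types, lifting) mult.assoc mult.commute)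
    qed
    finally show ?thesis .
  qed
  have "(\<Sum>j\<in>F. if h j \<le> \<tau> then \<nu> j * h j powr p else 0) \<le> (\<Sum>j\<in>F. \<Sum>k. g k j)"
    by (intro sum_mono pt)
  also have "\<dots> = (\<Sum>k. \<Sum>j\<in>F. g k j)" by (rule suminf_sum[symmetric]) (rule g_sum)
  also have "\<dots> \<le> (\<Sum>k. b k)"
    by (intro suminf_le gb summable_sum g_sum b_sum)
  finally show ?thesis using sum_b by simp
qed


lemma dyadic_big:
  fixes h \<nu> :: "'j \<Rightarrow> real" and R \<tau> t \<beta> :: real
  assumes h: "\<And>j. h j \<ge> 0" and nu: "\<And>j. \<nu> j \<ge> 0" and tau: "\<tau> > 0" and t: "0 < \<beta>" "\<beta> < t"
    and W: "\<And>\<tau>' F. \<tau>' > 0 \<Longrightarrow> finite F \<Longrightarrow> (\<Sum>j\<in>F. if h j > \<tau>' then \<nu> j else 0) \<le> R * \<tau>' powr (-t)"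
    and F: "finite F"
  shows "(\<Sum>j\<in>F. if h j > \<tau> then \<nu> j * h j powr \<beta> else 0)
         \<le> 2 powr \<beta> / (1 - 2 powr (\<beta> - t)) * R * \<tau> powr (\<beta> - t)"
proof -
  define d where "d = 2 powr \<beta>"
  have d: "0 \<le> d" unfolding d_def by simp
  define g where "g k j = (if h j > \<tau> * 2^k then \<nu> j * (\<tau> powr \<beta> * d^(k+1)) else 0)" for k :: nat and j
  have g_nonneg: "g k j \<ge> 0" for k j unfolding g_def d_def using nu by auto
  have g_sum: "summable (\<lambda>k. g k j)" for j
  proof -
    obtain K where K: "h j / \<tau> < 2^K" using real_arch_pow[of 2 "h j / \<tau>"] by auto
    show ?thesis
    proof (rule summable_finite[of "{..<K}"])
      fix k assume "k \<notin> {..<K}"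
      then have "K \<le> k" by simp
      then have "\<tau> * (2::real)^K \<le> \<tau> * 2^k" using tau by simp
      moreover have "h j < \<tau> * 2^K" using K tau by (simp add: field_simps)
      ultimately have "h j < \<tau> * 2^k" by linarith
      then show "g k j = 0" unfolding g_def by simp
    qed simp
  qed
  have pt: "(if h j > \<tau> then \<nu> j * h j powr \<beta> else 0) \<le> (\<Sum>k. g k j)" for j
  proof (cases "h j > \<tau>")
    case True
    then obtain m where m: "\<tau> * 2^m < h j" "h j \<le> \<tau> * 2^(m+1)"
      using exists_dyadic_above tau by blast
    have "h j powr \<beta> \<le> (\<tau> * 2^(m+1)) powr \<beta>" using m True t tau by (intro powr_mono2) auto
    also have "\<dots> = \<tau> powr \<beta> * d^(m+1)" unfolding d_def using tau by (rule pow2_mul)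
    finally have "\<nu> j * h j powr \<beta> \<le> g m j" unfolding g_def using m nu[of j] by (simp add: mult_left_mono)
    also have "g m j \<le> (\<Sum>k. g k j)"
      using sum_le_suminf[OF g_sum, of "{m}"] g_nonneg by simp
    finally show ?thesis using True by simp
  next
    case False
    then show ?thesis using suminf_nonneg[OF g_sum g_nonneg] by simp
  qed
  define b where "b k = 2 powr \<beta> * R * \<tau> powr (\<beta> - t) * (2 powr (\<beta> - t))^k" for k :: nat
  have q1: "2 powr (\<beta> - t) < 1" using t by (auto intro!: powr_less_one)
  have b_sum: "summable b" unfolding b_def using q1
    by (intro summable_mult summable_geometric) auto
  have sum_b: "(\<Sum>k. b k) = 2 powr \<beta> / (1 - 2 powr (\<beta> - t)) * R * \<tau> powr (\<beta> - t)"
    unfolding b_def using q1 by (simp add: suminf_mult suminf_geometric field_simps)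
  have gb: "(\<Sum>j\<in>F. g k j) \<le> b k" for k
  proof -
    have "(\<Sum>j\<in>F. g k j) = \<tau> powr \<beta> * d^(k+1) * (\<Sum>j\<in>F. if h j > \<tau> * 2^k then \<nu> j else 0)"
      unfolding g_def sum_distrib_left by (intro sum.cong) (auto simp: mult_ac)
    also have "\<dots> \<le> \<tau> powr \<beta> * d^(k+1) * (R * (\<tau> * 2^k) powr (-t))"
      using W[of "\<tau> * 2^k" F] tau F d by (intro mult_left_mono) auto
    also have "(\<tau> * 2^k) powr (-t) = \<tau> powr (-t) * (2 powr (-t))^k"
      using pow2_mul[OF tau, of k "-t"] by simp
    also have "\<tau> powr \<beta> * d^(k+1) * (R * (\<tau> powr (-t) * (2 powr (-t))^k)) = b k"
    proof -
      have "d^k * (2 powr (-t))^k = (2 powr (\<beta> - t))^k"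
        unfolding d_def by (simp add: power_mult_distrib[symmetric] powr_add[symmetric])
      moreover have "\<tau> powr \<beta> * \<tau> powr (-t) = \<tau> powr (\<beta> - t)" by (simp add: powr_add[symmetric])
      ultimately show ?thesis unfolding b_def d_def
        by (simp add: algebra_simps)
    qed
    finally show ?thesis .
  qed
  have "(\<Sum>j\<in>F. if h j > \<tau> then \<nu> j * h j powr \<beta> else 0) \<le> (\<Sum>j\<in>F. \<Sum>k. g k j)"
    by (intro sum_mono pt)
  also have "\<dots> = (\<Sum>k. \<Sum>j\<in>F. g k j)" by (rule suminf_sum[symmetric]) (rule g_sum)
  also have "\<dots> \<le> (\<Sum>k. b k)"
    by (intro suminf_le gb summable_sum g_sum b_sum)
  finally show ?thesis using sum_b by simp
qed


lemma weak_finite: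
  fixes \<mu> \<nu> x :: "'j \<Rightarrow> real" and t \<rho> \<tau>' :: real
  assumes nu: "\<And>j. \<nu> j \<ge> 0" and wb: "weak_norm_pow t \<mu> \<nu> x \<le> ennreal (\<rho> powr t)"
    and tau: "\<tau>' > 0" and F: "finite F"
  shows "(\<Sum>j\<in>F. if \<mu> j * \<bar>x j\<bar> > \<tau>' then \<nu> j else 0) \<le> \<rho> powr t * \<tau>' powr (-t)"
proof -
  define f where "f j = ennreal (\<nu> j * indicator {j. \<mu> j * \<bar>x j\<bar> > \<tau>'} j)" for j
  define I where "I = (\<integral>\<^sup>+ j. f j \<partial>count_space UNIV)"
  define S where "S = (\<Sum>j\<in>F. if \<mu> j * \<bar>x j\<bar> > \<tau>' then \<nu> j else 0)"
  have S0: "S \<ge> 0" unfolding S_def using nu by (intro sum_nonneg) auto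
  have "ennreal (\<tau>' powr t) * I \<le> weak_norm_pow t \<mu> \<nu> x"
    unfolding weak_norm_pow_def I_def f_def using tau by (intro SUP_upper) auto
  also note wb
  finally have 1: "ennreal (\<tau>' powr t) * I \<le> ennreal (\<rho> powr t)" .
  have "ennreal S = (\<Sum>j\<in>F. f j)"
    unfolding S_def f_def using nu by (subst sum_ennreal[symmetric]) (auto intro!: arg_cong[where f=ennreal] sum.cong simp: indicator_def)
  also have "\<dots> = (\<integral>\<^sup>+ j. f j \<partial>count_space F)" using F by (simp add: nn_integral_count_space_finite)
  also have "\<dots> = (\<integral>\<^sup>+ j. f j * indicator F j \<partial>count_space UNIV)"
    by (simp add: nn_integral_count_space_indicator)
  also have "\<dots> \<le> I" unfolding I_def
    by (intro nn_integral_mono) (auto simp: indicator_def)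
  finally have 2: "ennreal S \<le> I" .
  have "ennreal (\<tau>' powr t * S) = ennreal (\<tau>' powr t) * ennreal S" using S0 by (simp add: ennreal_mult)
  also have "\<dots> \<le> ennreal (\<tau>' powr t) * I" using 2 by (intro mult_left_mono) auto
  also note 1
  finally have "\<tau>' powr t * S \<le> \<rho> powr t" by (simp add: ennreal_le_iff)
  then have "\<tau>' powr (-t) * (\<tau>' powr t * S) \<le> \<tau>' powr (-t) * \<rho> powr t"
    by (intro mult_left_mono) auto
  moreover have "\<tau>' powr (-t) * (\<tau>' powr t * S) = S" using tau
    by (simp add: mult.assoc[symmetric] powr_add[symmetric])
  ultimately show ?thesis unfolding S_def by (simp add: mult.commute)
qed


lemma single_le_infsum:
  fixes f :: "'j \<Rightarrow> real"
  assumes "f summable_on UNIV" "\<And>j. f j \<ge> 0"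
  shows "f j \<le> infsum f UNIV"
proof -
  have "infsum f {j} \<le> infsum f UNIV"
    by (rule infsum_mono_neutral) (use assms in auto)
  then show ?thesis by simp
qed

lemma lp_norm_powr:
  assumes "p > 0"
  shows "lp_norm p w x powr p = (\<Sum>\<^sub>\<infinity>j. (w j * \<bar>x j\<bar>) powr p)"
proof -
  have "(\<Sum>\<^sub>\<infinity>j. (w j * \<bar>x j\<bar>) powr p) \<ge> 0" by (intro infsum_nonneg) auto
  then show ?thesis unfolding lp_norm_def using assms by (simp add: powr_powr)
qed

lemma powr_sum_le:
  fixes u v :: real and p :: real
  assumes "u \<ge> 0" "v \<ge> 0" "p > 0"
  shows "(u + v) powr p \<le> 2 powr p * (u powr p + v powr p)"
proof -
  have "(u + v) powr p \<le> (2 * max u v) powr p" using assms by (intro powr_mono2) auto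
  also have "\<dots> = 2 powr p * (max u v) powr p" using assms by (simp add: powr_mult)
  also have "(max u v) powr p \<le> u powr p + v powr p" using assms by (auto simp: max_def)
  finally show ?thesis by (simp add: mult_left_mono)
qed

lemma lp_diff:
  fixes w x y :: "'j \<Rightarrow> real"
  assumes w: "\<And>j. w j > 0" and p: "p > 0" and x: "x \<in> lp_space p w" and y: "y \<in> lp_space p w"
  shows "(\<lambda>j. x j + c * y j) \<in> lp_space p w"
proof -
  have sx: "(\<lambda>j. (w j * \<bar>x j\<bar>) powr p) summable_on UNIV" using x unfolding lp_space_def by simp
  have sy: "(\<lambda>j. (w j * \<bar>y j\<bar>) powr p) summable_on UNIV" using y unfolding lp_space_def by simp
  have s: "(\<lambda>j. 2 powr p * ((w j * \<bar>x j\<bar>) powr p + (\<bar>c\<bar> powr p * (w j * \<bar>y j\<bar>) powr p))) summable_on UNIV"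
    by (intro summable_on_cmult_right summable_on_add sx sy)
  show ?thesis unfolding lp_space_def
  proof (simp, rule summable_on_comparison_test[OF s])
    fix j
    have "(w j * \<bar>x j + c * y j\<bar>) powr p \<le> (w j * \<bar>x j\<bar> + w j * (\<bar>c\<bar> * \<bar>y j\<bar>)) powr p"
    proof -
      have "\<bar>x j + c * y j\<bar> \<le> \<bar>x j\<bar> + \<bar>c\<bar> * \<bar>y j\<bar>"
        using abs_triangle_ineq[of "x j" "c * y j"] by (simp add: abs_mult)
      then have "w j * \<bar>x j + c * y j\<bar> \<le> w j * \<bar>x j\<bar> + w j * (\<bar>c\<bar> * \<bar>y j\<bar>)"
        using w[of j] by (simp add: distrib_left[symmetric] mult_left_mono)
      then show ?thesis using w[of j] p by (intro powr_mono2) auto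
    qed
    also have "\<dots> \<le> 2 powr p * ((w j * \<bar>x j\<bar>) powr p + (w j * (\<bar>c\<bar> * \<bar>y j\<bar>)) powr p)"
      using w[of j] p by (intro powr_sum_le) auto
    also have "(w j * (\<bar>c\<bar> * \<bar>y j\<bar>)) powr p = \<bar>c\<bar> powr p * (w j * \<bar>y j\<bar>) powr p"
      using w[of j] by (simp add: powr_mult mult_ac)
    finally show "(w j * \<bar>x j + c * y j\<bar>) powr p \<le> 2 powr p * ((w j * \<bar>x j\<bar>) powr p + \<bar>c\<bar> powr p * (w j * \<bar>y j\<bar>) powr p)" .
  qed auto
qed

lemma lp_p_to_2:
  fixes a r x :: "'j \<Rightarrow> real"
  assumes a: "\<And>j. a j > 0" and r: "\<And>j. r j > 0" and K: "\<And>j. a j / r j \<le> K"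
    and p: "1 < p" "p < 2" and x: "x \<in> lp_space p r"
  shows "x \<in> lp_space 2 a"
proof -
  have sx: "(\<lambda>j. (r j * \<bar>x j\<bar>) powr p) summable_on UNIV" using x unfolding lp_space_def by simp
  define A1 where "A1 = (\<Sum>\<^sub>\<infinity>j. (r j * \<bar>x j\<bar>) powr p)"
  have le: "(r j * \<bar>x j\<bar>) powr p \<le> A1" for j
    unfolding A1_def by (rule single_le_infsum[OF sx]) auto
  have s: "(\<lambda>j. K^2 * A1 powr ((2 - p) / p) * (r j * \<bar>x j\<bar>) powr p) summable_on UNIV"
    by (intro summable_on_cmult_right sx)
  have pt: "(a j * \<bar>x j\<bar>) powr 2 \<le> K^2 * A1 powr ((2 - p) / p) * (r j * \<bar>x j\<bar>) powr p" for j
  proof -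
    define q where "q = r j * \<bar>x j\<bar>"
    have q0: "q \<ge> 0" unfolding q_def using r[of j] by simp
    have qA: "q \<le> A1 powr (1 / p)"
    proof -
      have "q = (q powr p) powr (1 / p)" using q0 p by (simp add: powr_powr)
      also have "\<dots> \<le> A1 powr (1 / p)" using le[of j] p q0 unfolding q_def by (intro powr_mono2) auto
      finally show ?thesis .
    qed
    have K0: "0 \<le> a j / r j" using a[of j] r[of j] by simp
    have e1: "(a j * \<bar>x j\<bar>) = (a j / r j) * q" unfolding q_def using r[of j] by simp
    have e2: "(a j * \<bar>x j\<bar>)^2 = (a j / r j)^2 * q^2" unfolding e1 by (simp only: power_mult_distrib)
    have e3: "(a j / r j)^2 * q^2 \<le> K^2 * q^2" using K[of j] K0 by (intro mult_right_mono power_mono) auto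
    have e4: "q^2 = q powr p * q powr (2 - p)"
      using q0 by (cases "q = 0") (auto simp: powr_add[symmetric])
    have e5: "q powr (2 - p) \<le> A1 powr ((2 - p) / p)"
    proof -
      have "q powr (2 - p) \<le> (A1 powr (1 / p)) powr (2 - p)" using qA q0 p by (intro powr_mono2) auto
      also have "(A1 powr (1 / p)) powr (2 - p) = A1 powr ((2 - p) / p)" by (simp add: powr_powr)
      finally show ?thesis .
    qed
    have e6: "q^2 \<le> q powr p * A1 powr ((2 - p) / p)" unfolding e4 by (intro mult_left_mono e5) auto
    have e7: "K^2 * q^2 \<le> K^2 * (q powr p * A1 powr ((2 - p) / p))" by (intro mult_left_mono e6) auto
    have "(a j * \<bar>x j\<bar>) powr 2 = (a j * \<bar>x j\<bar>)^2" using a[of j] by simp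
    then show ?thesis
      using e2 e3 e7 unfolding q_def by (simp add: mult_ac)
  qed
  show ?thesis unfolding lp_space_def
    by (auto intro!: summable_on_comparison_test[OF s] pt)
qed


lemma final_arith:
  fixes T \<epsilon> \<delta> res \<alpha> M p c1 c2 cl cr cD CD E2 S B Ps Pb :: real
  assumes T: "T > 0" and eps: "\<epsilon> > 0" and dl: "\<delta> > 0" and res: "res \<ge> 0" and al: "\<alpha> > 0"
    and M: "M \<ge> 1" and p: "1 < p" "p < 2" and c12: "c1 \<ge> 0" "c2 \<ge> 0"
    and c: "cr \<ge> cl" "cl > 0" and cD: "CD > cD" "cD > 1"
    and hd: "\<delta>^2 = T * \<epsilon>"
    and hE: "E2 \<le> M^2 * (\<delta> + res)^2"
    and Ps0: "Ps \<ge> 0"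
    and hS: "S \<le> c1 * T" and hB: "B \<le> c2 * T / \<epsilon>"
    and hPb: "Pb \<le> p / 2 * E2 / \<epsilon> + (2 - p) / 2 * T"
    and hmain: "\<And>l. l > 0 \<Longrightarrow> 2 powr (-p) * Ps \<le> p * (\<delta>^2 - res^2) / (2 * \<alpha>) + 2 * S + p * l / 2 * B + p / (2 * l) * E2"
    and hcase: "(cl * \<epsilon> \<le> \<alpha> \<and> \<alpha> \<le> cr * \<epsilon>) \<or> (cD * \<delta> \<le> res \<and> res \<le> CD * \<delta>)"
  shows "Ps + Pb \<le> ((2 powr p * (2 * c1 + p / 2 * c2 + p / 2 * M^2 * (1 + CD)^2)
                    + p / 2 * M^2 * (1 + CD)^2 + 1)
                  + (2 powr p * (p / (2 * cl) + 2 * c1 + 2 * p * M^2 * cr * c2 + p / (4 * cr))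
                    + p * M^2 * (1 + 4 * cr * (p / (2 * cl) + 2 * c1 + 2 * p * M^2 * cr * c2 + p / (4 * cr)) / p) + 1)) * T"
    (is "_ \<le> (?CD + ?CA) * T")
proof -
  have cr: "cr > 0" using c by simp
  define K0 where "K0 = p / (2 * cl) + 2 * c1 + 2 * p * M^2 * cr * c2 + p / (4 * cr)"
  have K0: "K0 \<ge> 0" unfolding K0_def using p c12 c cr by (intro add_nonneg_nonneg) auto
  have CD0: "?CD \<ge> 0" using p c12 by (intro add_nonneg_nonneg mult_nonneg_nonneg) auto
  have CA0: "?CA \<ge> 0" using p c12 K0 cr unfolding K0_def[symmetric] by (intro add_nonneg_nonneg mult_nonneg_nonneg divide_nonneg_pos) auto
  have p2: "2 powr p > 0" "2 powr p * 2 powr (-p) = 1" by (auto simp: powr_add[symmetric])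
  from hcase show ?thesis
  proof
    assume A: "cl * \<epsilon> \<le> \<alpha> \<and> \<alpha> \<le> cr * \<epsilon>"
    define l where "l = 4 * M^2 * cr * \<epsilon>"
    have l: "l > 0" unfolding l_def using M cr eps by simp
    have h1: "2 powr (-p) * Ps \<le> p * (\<delta>^2 - res^2) / (2 * \<alpha>) + 2 * S + p * l / 2 * B + p / (2 * l) * E2"
      by (rule hmain[OF l])
    have E2': "E2 \<le> 2 * M^2 * (\<delta>^2 + res^2)"
    proof -
      have "(\<delta> + res)^2 = 2 * (\<delta>^2 + res^2) - (\<delta> - res)^2" by (simp add: power2_eq_square algebra_simps)
      moreover have "(\<delta> - res)^2 \<ge> 0" by simp
      ultimately have "(\<delta> + res)^2 \<le> 2 * (\<delta>^2 + res^2)" by linarith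
      then have "M^2 * (\<delta> + res)^2 \<le> M^2 * (2 * (\<delta>^2 + res^2))" by (intro mult_left_mono) auto
      moreover have "M^2 * (2 * (\<delta>^2 + res^2)) = 2 * M^2 * (\<delta>^2 + res^2)" by (simp add: mult_ac)
      ultimately show ?thesis using hE by linarith
    qed
    have t1: "p * \<delta>^2 / (2 * \<alpha>) \<le> p / (2 * cl) * T"
    proof -
      have "p * \<delta>^2 / (2 * \<alpha>) = p * T * \<epsilon> / (2 * \<alpha>)" using hd by simp
      also have "\<dots> \<le> p * T * \<epsilon> / (2 * (cl * \<epsilon>))" using A al T p c eps
        by (intro divide_left_mono mult_pos_pos) auto
      also have "\<dots> = p / (2 * cl) * T" using eps by (simp add: field_simps)
      finally show ?thesis .
    qed
    have t2: "p * l / 2 * B \<le> 2 * p * M^2 * cr * c2 * T"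
    proof -
      have "p * l / 2 * B \<le> p * l / 2 * (c2 * T / \<epsilon>)" using hB p l by (intro mult_left_mono) auto
      also have "\<dots> = 2 * p * M^2 * cr * c2 * T" unfolding l_def using eps by (simp add: field_simps)
      finally show ?thesis .
    qed
    have t3: "p / (2 * l) * E2 \<le> p / (4 * cr) * T + p * res^2 / (4 * \<alpha>)"
    proof -
      have "p / (2 * l) * E2 \<le> p / (2 * l) * (2 * M^2 * (\<delta>^2 + res^2))" using E2' p l by (intro mult_left_mono) auto
      also have "\<dots> = p / (4 * cr) * T + p * res^2 / (4 * cr * \<epsilon>)"
        unfolding l_def using eps cr M hd by (simp add: field_simps power2_eq_square)
      also have "p * res^2 / (4 * cr * \<epsilon>) \<le> p * res^2 / (4 * \<alpha>)"
        using A al p cr eps by (intro divide_left_mono) (auto intro!: mult_pos_pos)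
      finally show ?thesis by simp
    qed
    have key: "2 powr (-p) * Ps + p * res^2 / (4 * \<alpha>) \<le> K0 * T"
    proof -
      have "p * (\<delta>^2 - res^2) / (2 * \<alpha>) = p * \<delta>^2 / (2 * \<alpha>) - p * res^2 / (2 * \<alpha>)"
        by (simp add: diff_divide_distrib right_diff_distrib)
      moreover have "p * res^2 / (2 * \<alpha>) = 2 * (p * res^2 / (4 * \<alpha>))" by (simp add: field_simps)
      moreover have "2 * S \<le> 2 * c1 * T" using hS by simp
      moreover have "K0 * T = p / (2 * cl) * T + 2 * c1 * T + 2 * p * M^2 * cr * c2 * T + p / (4 * cr) * T"
        unfolding K0_def by (simp add: algebra_simps)
      ultimately show ?thesis using h1 t1 t2 t3 by linarith
    qed
    have Ps: "Ps \<le> 2 powr p * K0 * T"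
    proof -
      have "p * res^2 / (4 * \<alpha>) \<ge> 0" using p al by simp
      then have "2 powr (-p) * Ps \<le> K0 * T" using key by linarith
      then have "2 powr p * (2 powr (-p) * Ps) \<le> 2 powr p * (K0 * T)" using p2 by (intro mult_left_mono) auto
      then show ?thesis using p2 by (simp add: mult.assoc[symmetric])
    qed
    have res2: "res^2 \<le> 4 * cr * K0 / p * T * \<epsilon>"
    proof -
      have "2 powr (-p) * Ps \<ge> 0" using Ps0 by simp
      then have "p * res^2 / (4 * \<alpha>) \<le> K0 * T" using key by linarith
      then have "p * res^2 \<le> K0 * T * (4 * \<alpha>)" using al by (simp add: divide_le_eq)
      also have "\<dots> \<le> K0 * T * (4 * (cr * \<epsilon>))" using A K0 T by (intro mult_left_mono) auto
      finally have "p * res^2 \<le> K0 * T * (4 * (cr * \<epsilon>))" .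
      then show ?thesis using p by (simp add: field_simps)
    qed
    have Pb: "Pb \<le> (p * M^2 * (1 + 4 * cr * K0 / p) + 1) * T"
    proof -
      have "\<delta>^2 + res^2 \<le> T * \<epsilon> + 4 * cr * K0 / p * T * \<epsilon>" using res2 hd by linarith
      then have "2 * M^2 * (\<delta>^2 + res^2) \<le> 2 * M^2 * (T * \<epsilon> + 4 * cr * K0 / p * T * \<epsilon>)"
        by (intro mult_left_mono) auto
      then have "E2 \<le> 2 * M^2 * (T * \<epsilon> + 4 * cr * K0 / p * T * \<epsilon>)"
        using E2' by linarith
      then have "p / 2 * E2 / \<epsilon> \<le> p / 2 * (2 * M^2 * (T * \<epsilon> + 4 * cr * K0 / p * T * \<epsilon>)) / \<epsilon>"
        using p eps by (intro divide_right_mono mult_left_mono) auto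
      also have "\<dots> = p * M^2 * (1 + 4 * cr * K0 / p) * T" using eps by (simp add: field_simps)
      finally have "p / 2 * E2 / \<epsilon> \<le> p * M^2 * (1 + 4 * cr * K0 / p) * T" .
      moreover have "(2 - p) / 2 * T \<le> T" using p T by simp
      moreover have "(p * M^2 * (1 + 4 * cr * K0 / p) + 1) * T = p * M^2 * (1 + 4 * cr * K0 / p) * T + T"
        by (simp add: distrib_right)
      ultimately show ?thesis using hPb by linarith
    qed
    have "?CA * T = 2 powr p * K0 * T + (p * M^2 * (1 + 4 * cr * K0 / p) + 1) * T"
      unfolding K0_def by (simp add: distrib_right)
    then have "Ps + Pb \<le> ?CA * T" using Ps Pb by linarith
    also have "\<dots> \<le> (?CD + ?CA) * T" using CD0 T by (intro mult_right_mono) auto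
    finally show ?thesis .
  next
    assume D: "cD * \<delta> \<le> res \<and> res \<le> CD * \<delta>"
    have l: "\<epsilon> > 0" by (rule eps)
    have h1: "2 powr (-p) * Ps \<le> p * (\<delta>^2 - res^2) / (2 * \<alpha>) + 2 * S + p * \<epsilon> / 2 * B + p / (2 * \<epsilon>) * E2"
      by (rule hmain[OF l])
    have "1 * \<delta> \<le> cD * \<delta>" using cD dl by (intro mult_right_mono) auto
    then have "\<delta> \<le> res" using D by linarith
    then have "\<delta>^2 \<le> res^2" using dl by (intro power_mono) auto
    then have t0: "p * (\<delta>^2 - res^2) / (2 * \<alpha>) \<le> 0" using p al by (intro divide_nonpos_pos mult_nonneg_nonpos) auto
    have E2': "E2 \<le> M^2 * (1 + CD)^2 * T * \<epsilon>"
    proof -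
      have "\<delta> + res \<le> (1 + CD) * \<delta>" using D by (simp add: distrib_right)
      then have "(\<delta> + res)^2 \<le> ((1 + CD) * \<delta>)^2" using dl res by (intro power_mono) auto
      then have "M^2 * (\<delta> + res)^2 \<le> M^2 * ((1 + CD) * \<delta>)^2" by (intro mult_left_mono) auto
      then show ?thesis using hE hd by (simp add: power_mult_distrib mult.assoc)
    qed
    have t2: "p * \<epsilon> / 2 * B \<le> p / 2 * c2 * T"
    proof -
      have "p * \<epsilon> / 2 * B \<le> p * \<epsilon> / 2 * (c2 * T / \<epsilon>)" using hB p eps by (intro mult_left_mono) auto
      also have "\<dots> = p / 2 * c2 * T" using eps by (simp add: field_simps)
      finally show ?thesis .
    qed
    have t3: "p / (2 * \<epsilon>) * E2 \<le> p / 2 * M^2 * (1 + CD)^2 * T"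
    proof -
      have "p / (2 * \<epsilon>) * E2 \<le> p / (2 * \<epsilon>) * (M^2 * (1 + CD)^2 * T * \<epsilon>)" using E2' p eps by (intro mult_left_mono) auto
      also have "\<dots> = p / 2 * M^2 * (1 + CD)^2 * T" using eps by (simp add: field_simps)
      finally show ?thesis .
    qed
    have key: "2 powr (-p) * Ps \<le> (2 * c1 + p / 2 * c2 + p / 2 * M^2 * (1 + CD)^2) * T"
    proof -
      have "(2 * c1 + p / 2 * c2 + p / 2 * M^2 * (1 + CD)^2) * T = 2 * (c1 * T) + p / 2 * c2 * T + p / 2 * M^2 * (1 + CD)^2 * T"
        by (simp add: algebra_simps)
      then show ?thesis using h1 t0 t2 t3 hS by linarith
    qed
    have Ps: "Ps \<le> 2 powr p * (2 * c1 + p / 2 * c2 + p / 2 * M^2 * (1 + CD)^2) * T"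
    proof -
      have "2 powr p * (2 powr (-p) * Ps) \<le> 2 powr p * ((2 * c1 + p / 2 * c2 + p / 2 * M^2 * (1 + CD)^2) * T)"
        using key p2 by (intro mult_left_mono) auto
      then show ?thesis using p2 by (simp add: mult.assoc[symmetric])
    qed
    have Pb: "Pb \<le> (p / 2 * M^2 * (1 + CD)^2 + 1) * T"
    proof -
      have "p / 2 * E2 / \<epsilon> \<le> p / 2 * (M^2 * (1 + CD)^2 * T * \<epsilon>) / \<epsilon>"
        using E2' p eps by (intro divide_right_mono mult_left_mono) auto
      also have "\<dots> = p / 2 * M^2 * (1 + CD)^2 * T" using eps by (simp add: field_simps)
      finally have "p / 2 * E2 / \<epsilon> \<le> p / 2 * M^2 * (1 + CD)^2 * T" .
      moreover have "(2 - p) / 2 * T \<le> T" using p T by simp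
      moreover have "(p / 2 * M^2 * (1 + CD)^2 + 1) * T = p / 2 * M^2 * (1 + CD)^2 * T + T"
        by (simp add: distrib_right)
      ultimately show ?thesis using hPb by linarith
    qed
    have "?CD * T = 2 powr p * (2 * c1 + p / 2 * c2 + p / 2 * M^2 * (1 + CD)^2) * T + (p / 2 * M^2 * (1 + CD)^2 + 1) * T"
      by (simp add: distrib_right)
    then have "Ps + Pb \<le> ?CD * T" using Ps Pb by linarith
    also have "\<dots> \<le> (?CD + ?CA) * T" using CA0 T by (intro mult_right_mono) auto
    finally show ?thesis .
  qed
qed


context
  fixes a r X Y \<tau> p \<nu> \<mu> h :: real
  assumes a: "a > 0" and r: "r > 0" and p: "1 < p" "p < 2" and tau: "\<tau> > 0"
    and nu: "\<nu> = (r / a) powr (2 * p / (2 - p))"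
    and mu: "\<mu> = (a ^ 2 * r powr (- p)) powr (1 / (2 - p))"
    and h: "h = \<mu> * \<bar>X\<bar>"
begin

lemma pt1: "\<nu> * h powr p = (r * \<bar>X\<bar>) powr p"
  using id_Q1[OF a r _ p(2), of "\<bar>X\<bar>"] nu mu h by simp

lemma h0: "h \<ge> 0" unfolding h mu by simp

lemma pt2:
  assumes l: "l > 0"
  shows "2 powr (-p) * (if h \<le> \<tau> then (r * \<bar>X - Y\<bar>) powr p else 0) + (r * \<bar>X\<bar>) powr p
     \<le> (r * \<bar>Y\<bar>) powr p + 2 * (if h \<le> \<tau> then (r * \<bar>X\<bar>) powr p else 0)
       + p * l / 2 * (if \<tau> < h then \<nu> * h powr (2 * p - 2) else 0) + p / (2 * l) * (a * \<bar>X - Y\<bar>) powr 2"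
proof -
  define q where "q = r * \<bar>X\<bar>"
  define v where "v = r * \<bar>Y\<bar>"
  define re where "re = r * \<bar>X - Y\<bar>"
  define ae where "ae = a * \<bar>X - Y\<bar>"
  have q0: "q \<ge> 0" and v0: "v \<ge> 0" and re0: "re \<ge> 0" and ae0: "ae \<ge> 0"
    unfolding q_def v_def re_def ae_def using a r by auto
  have re_le: "re \<le> q + v"
    unfolding q_def v_def re_def using r abs_triangle_ineq4[of X Y]
    by (simp add: distrib_left[symmetric] mult_left_mono)
  have re_ge: "q - v \<le> re"
    unfolding q_def v_def re_def using r abs_triangle_ineq2[of X Y]
    by (simp add: right_diff_distrib[symmetric] mult_left_mono)
  have nn: "0 \<le> p / (2 * l) * ae powr 2" using p l by simp
  have nn2: "0 \<le> p * l / 2 * (if \<tau> < h then \<nu> * h powr (2 * p - 2) else 0)"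
    using p l nu by simp
  show ?thesis
  proof (cases "h \<le> \<tau>")
    case True
    have "re powr p \<le> 2 powr p * (q powr p + v powr p)"
    proof -
      have "re powr p \<le> (q + v) powr p" using re_le re0 p by (intro powr_mono2) auto
      also have "\<dots> \<le> 2 powr p * (q powr p + v powr p)" using q0 v0 p by (intro powr_sum_le) auto
      finally show ?thesis .
    qed
    then have "2 powr (-p) * re powr p \<le> 2 powr (-p) * (2 powr p * (q powr p + v powr p))"
      by (intro mult_left_mono) auto
    also have "\<dots> = q powr p + v powr p" by (simp add: mult.assoc[symmetric] powr_add[symmetric])
    finally have "2 powr (-p) * re powr p \<le> q powr p + v powr p" .
    then show ?thesis using True nn nn2
      unfolding q_def[symmetric] v_def[symmetric] re_def[symmetric] ae_def[symmetric] by simp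
  next
    case False
    have tan: "q powr p - v powr p \<le> p * q powr (p - 1) * re"
    proof (cases "v \<le> q")
      case True
      have "q powr p - v powr p \<le> p * q powr (p - 1) * (q - v)"
        using p v0 True by (intro tangent_powr) auto
      also have "\<dots> \<le> p * q powr (p - 1) * re" using re_ge p by (intro mult_left_mono) auto
      finally show ?thesis .
    next
      case False
      then have "q powr p \<le> v powr p" using q0 p by (intro powr_mono2) auto
      moreover have "0 \<le> p * q powr (p - 1) * re" using p re0 by simp
      ultimately show ?thesis by linarith
    qed
    define Xp where "Xp = q powr (p - 1) * r / a"
    have "q powr (p - 1) * re = Xp * ae"
      unfolding Xp_def re_def ae_def using a by (simp add: field_simps)
    also have "\<dots> \<le> l / 2 * Xp^2 + 1 / (2 * l) * ae^2" by (rule amgm2[OF l])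
    also have "Xp^2 = \<nu> * h powr (2 * p - 2)"
      unfolding Xp_def q_def nu h mu using id_Q4[OF a r _ p, of "\<bar>X\<bar>"] by simp
    finally have am: "q powr (p - 1) * re \<le> l / 2 * (\<nu> * h powr (2 * p - 2)) + 1 / (2 * l) * ae^2" .
    have "p * (q powr (p - 1) * re) \<le> p * (l / 2 * (\<nu> * h powr (2 * p - 2)) + 1 / (2 * l) * ae^2)"
      using am p by (intro mult_left_mono) auto
    also have "\<dots> = p * l / 2 * (\<nu> * h powr (2 * p - 2)) + p / (2 * l) * ae powr 2"
      using ae0 by (simp add: field_simps)
    finally have "q powr p \<le> v powr p + (p * l / 2 * (\<nu> * h powr (2 * p - 2)) + p / (2 * l) * ae powr 2)"
      using tan by (simp add: mult.assoc)
    then show ?thesis using False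
      unfolding q_def[symmetric] v_def[symmetric] re_def[symmetric] ae_def[symmetric] by simp
  qed
qed

lemma pt3: "(if \<tau> < h then (r * \<bar>X - Y\<bar>) powr p else 0)
   \<le> p / 2 * \<tau> powr (p - 2) * (a * \<bar>X - Y\<bar>) powr 2 + (2 - p) / 2 * \<tau> powr p * (if \<tau> < h then \<nu> else 0)"
proof (cases "\<tau> < h")
  case True
  then show ?thesis using young_pt[OF a r _ p tau nu, of "\<bar>X - Y\<bar>"] by simp
next
  case False
  then show ?thesis using p nu by simp
qed

lemma pt4: "(if \<tau> < h then \<nu> * h powr (2 * p - 2) else 0) \<le> \<tau> powr (p - 2) * (r * \<bar>X\<bar>) powr p"
proof (cases "\<tau> < h")
  case True
  then have hp: "h > 0" using tau by simp
  have "h powr (2 * p - 2) = h powr p * h powr (p - 2)" using hp by (simp add: powr_add[symmetric])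
  also have "\<dots> \<le> h powr p * \<tau> powr (p - 2)" using True tau p by (intro mult_left_mono powr_mono2') auto
  finally have "\<nu> * h powr (2 * p - 2) \<le> \<nu> * (h powr p * \<tau> powr (p - 2))" using nu by (intro mult_left_mono) auto
  moreover have "\<nu> * (h powr p * \<tau> powr (p - 2)) = \<tau> powr (p - 2) * (r * \<bar>X\<bar>) powr p"
    using pt1 by (simp add: mult.assoc[symmetric] mult.commute)
  ultimately show ?thesis using True by simp
next
  case False
  then show ?thesis by simp
qed

lemma pt5: "(if \<tau> < h then \<nu> else 0) \<le> \<tau> powr (- p) * (r * \<bar>X\<bar>) powr p"
proof (cases "\<tau> < h")
  case True
  then have hp: "h > 0" using tau by simp
  have "1 = h powr p * h powr (- p)" using hp by (simp add: powr_add[symmetric])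
  also have "\<dots> \<le> h powr p * \<tau> powr (- p)" using True tau p by (intro mult_left_mono powr_mono2') auto
  finally have "\<nu> * 1 \<le> \<nu> * (h powr p * \<tau> powr (- p))" using nu by (intro mult_left_mono) auto
  moreover have "\<nu> * (h powr p * \<tau> powr (- p)) = \<tau> powr (- p) * (r * \<bar>X\<bar>) powr p"
    using pt1 by (simp add: mult.assoc[symmetric] mult.commute)
  ultimately show ?thesis using True by simp
next
  case False
  then show ?thesis by simp
qed

end

context
  fixes \<rho> \<delta> t p \<tau> :: real
  assumes rho: "\<rho> > 0" and dl: "\<delta> > 0" and p: "1 < p" "p < 2" and t: "0 < t" "t < p"
    and tau: "\<tau> = \<delta> powr (2 / (2 - t)) * \<rho> powr (- t / (2 - t))"
begin

lemma tau_pos: "\<tau> > 0" using tau rho dl by simp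

lemma t2: "2 - t \<noteq> 0" using t p by simp

lemma tt: "t * t + 4 - t * 4 \<noteq> 0"
proof -
  have "(2 - t)^2 > 0" using t2 by simp
  then have "(2 - t) * (2 - t) > 0" by (simp add: power2_eq_square)
  then show ?thesis by (simp add: algebra_simps)
qed

lemma ptt: "p * (p * (t * t)) + p * (p * 4) - p * (p * (t * 4)) \<noteq> 0"
proof -
  have "(2 - t)^2 > 0" using t2 by simp
  then have "(p * p) * ((2 - t) * (2 - t)) > 0" using p by (simp add: power2_eq_square)
  then show ?thesis by (simp add: algebra_simps)
qed

lemma ln_tau: "ln \<tau> = (2 * ln \<delta> - t * ln \<rho>) / (2 - t)"
  using rho dl t2 tt unfolding tau by (simp add: ln_mult field_simps)

lemma sc_a: "\<delta>^2 = (\<rho> powr t * \<tau> powr (p - t)) * \<tau> powr (2 - p)"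
proof (rule pos_eq_by_ln)
  show "ln (\<delta>^2) = ln ((\<rho> powr t * \<tau> powr (p - t)) * \<tau> powr (2 - p))"
    using rho dl tau_pos t2 using tt by (simp add: ln_mult ln_realpow ln_tau field_simps)
qed (use rho dl tau_pos in auto)

lemma sc_b: "\<rho> powr t * \<tau> powr (2 * p - 2 - t) = (\<rho> powr t * \<tau> powr (p - t)) / \<tau> powr (2 - p)"
proof -
  have "2 * p - 2 - t = (p - t) - (2 - p)" by simp
  then have "\<tau> powr (2 * p - 2 - t) = \<tau> powr (p - t) / \<tau> powr (2 - p)"
    using tau_pos by (simp only: powr_diff)
  then show ?thesis by simp
qed

lemma sc_c: "\<tau> powr (p - 2) = 1 / \<tau> powr (2 - p)"
  using tau_pos by (simp add: powr_minus_divide[symmetric])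

lemma sc_d: "\<tau> powr p * (\<rho> powr t * \<tau> powr (- t)) = \<rho> powr t * \<tau> powr (p - t)"
  using tau_pos by (simp add: powr_add[symmetric] mult_ac)

lemma sc_e: "\<rho> powr (- t * (2 - p) / (2 - t)) * \<delta> powr (2 * (2 - p) / (2 - t)) = \<tau> powr (2 - p)"
proof (rule pos_eq_by_ln)
  show "ln (\<rho> powr (- t * (2 - p) / (2 - t)) * \<delta> powr (2 * (2 - p) / (2 - t))) = ln (\<tau> powr (2 - p))"
    using rho dl tau_pos t2 tt by (simp add: ln_mult ln_tau field_simps)
qed (use rho dl tau_pos in auto)

lemma sc_f: "(\<rho> powr t * \<tau> powr (p - t)) powr (1 / p)
   = \<rho> powr (t * (2 - p) / (p * (2 - t))) * \<delta> powr (2 * (p - t) / (p * (2 - t)))"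
proof (rule pos_eq_by_ln)
  show "ln ((\<rho> powr t * \<tau> powr (p - t)) powr (1 / p))
   = ln (\<rho> powr (t * (2 - p) / (p * (2 - t))) * \<delta> powr (2 * (p - t) / (p * (2 - t))))"
    using rho dl tau_pos t2 p tt ptt by (simp add: ln_mult ln_tau field_simps)
qed (use rho dl tau_pos in auto)

end

theorem corollary2p4:
  fixes a r :: "'j::countable \<Rightarrow> real"
    and A :: "('j \<Rightarrow> real) \<Rightarrow> 'y::{real_inner, complete_space}"
    and M p t c\<^sub>l c\<^sub>r c\<^sub>D C\<^sub>D :: real
  assumes a_pos: "\<And>j. a j > 0" and r_pos: "\<And>j. r j > 0"
    and ar_bdd: "bounded (range (\<lambda>j. a j / r j))"
    and A_add: "\<And>x y. x \<in> lp_space 2 a \<Longrightarrow> y \<in> lp_space 2 a \<Longrightarrow> A (\<lambda>j. x j + y j) = A x + A y"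
    and A_scale: "\<And>c x. x \<in> lp_space 2 a \<Longrightarrow> A (\<lambda>j. c * x j) = c *\<^sub>R A x"
    and M_ge: "M \<ge> 1"
    and A_lower: "\<And>x. x \<in> lp_space 2 a \<Longrightarrow> (1 / M) * lp_norm 2 a x \<le> norm (A x)"
    and A_upper: "\<And>x. x \<in> lp_space 2 a \<Longrightarrow> norm (A x) \<le> M * lp_norm 2 a x"
    and p: "1 < p" "p < 2"
    and t: "2 * p - 2 < t" "t < p"
    and c: "c\<^sub>r \<ge> c\<^sub>l" "c\<^sub>l > 0"
    and cD: "C\<^sub>D > c\<^sub>D" "c\<^sub>D > 1"
  shows "\<exists>C>0. \<forall>x \<delta> \<rho> g \<alpha> xh.
     \<delta> > 0 \<longrightarrow> \<rho> > 0 \<longrightarrow>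
     x \<in> lp_space p r \<longrightarrow>
     x \<in> weak_space t (\<lambda>j. (a j ^ 2 * r j powr (- p)) powr (1 / (2 - p)))
                       (\<lambda>j. (r j / a j) powr (2 * p / (2 - p))) \<longrightarrow>
     weak_norm_pow t (\<lambda>j. (a j ^ 2 * r j powr (- p)) powr (1 / (2 - p)))
                     (\<lambda>j. (r j / a j) powr (2 * p / (2 - p))) x \<le> ennreal (\<rho> powr t) \<longrightarrow>
     norm (g - A x) \<le> \<delta> \<longrightarrow>
     \<alpha> > 0 \<longrightarrow>
     xh \<in> tikhonov_minimizers A p r \<alpha> g \<longrightarrow>
     ((c\<^sub>l * \<rho> powr (- t * (2 - p) / (2 - t)) * \<delta> powr (2 * (2 - p) / (2 - t)) \<le> \<alpha> \<and>
       \<alpha> \<le> c\<^sub>r * \<rho> powr (- t * (2 - p) / (2 - t)) * \<delta> powr (2 * (2 - p) / (2 - t)))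
      \<or> (c\<^sub>D * \<delta> \<le> norm (g - A xh) \<and> norm (g - A xh) \<le> C\<^sub>D * \<delta>)) \<longrightarrow>
     lp_norm p r (\<lambda>j. x j - xh j)
       \<le> C * \<rho> powr (t * (2 - p) / (p * (2 - t))) * \<delta> powr (2 * (p - t) / (p * (2 - t)))"

proof -
  obtain K where K: "\<And>j. a j / r j \<le> K"
  proof -
    obtain B where B: "\<forall>y\<in>range (\<lambda>j. a j / r j). norm y \<le> B" using ar_bdd unfolding bounded_iff by blast
    show ?thesis
    proof (rule that[of B])
      fix j
      have "norm (a j / r j) \<le> B" using B by blast
      then show "a j / r j \<le> B" unfolding real_norm_def by (rule abs_le_D1)
    qed
  qed
  have t0: "0 < t" using t p by simp
  have beta: "0 < 2 * p - 2" "2 * p - 2 < t" using p t by auto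
  define c1 where "c1 = 2 powr t / (1 - 2 powr (t - p))"
  define c2 where "c2 = 2 powr (2 * p - 2) / (1 - 2 powr (2 * p - 2 - t))"
  have "2 powr (t - p) < 1" using t by (auto intro!: powr_less_one)
  then have c1: "c1 \<ge> 0" unfolding c1_def by simp
  have "2 powr (2 * p - 2 - t) < 1" using t by (auto intro!: powr_less_one)
  then have c2: "c2 \<ge> 0" unfolding c2_def by simp
  define Cst where "Cst = ((2 powr p * (2 * c1 + p / 2 * c2 + p / 2 * M^2 * (1 + C\<^sub>D)^2)
                    + p / 2 * M^2 * (1 + C\<^sub>D)^2 + 1)
                  + (2 powr p * (p / (2 * c\<^sub>l) + 2 * c1 + 2 * p * M^2 * c\<^sub>r * c2 + p / (4 * c\<^sub>r))
                    + p * M^2 * (1 + 4 * c\<^sub>r * (p / (2 * c\<^sub>l) + 2 * c1 + 2 * p * M^2 * c\<^sub>r * c2 + p / (4 * c\<^sub>r)) / p) + 1))"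
  have cr: "c\<^sub>r > 0" using c by simp
  have Cst: "Cst > 0" unfolding Cst_def using p c cr c1 c2
    by (intro add_pos_pos add_nonneg_pos add_nonneg_nonneg mult_nonneg_nonneg divide_nonneg_pos) auto
  show ?thesis
  proof (intro exI[of _ "Cst powr (1 / p)"] conjI allI impI)
    show "Cst powr (1 / p) > 0" using Cst by simp
  next
    fix x \<delta> \<rho> g \<alpha> xh
    assume dl: "\<delta> > 0" and rho: "\<rho> > 0" and hx: "x \<in> lp_space p r"
      and hw: "x \<in> weak_space t (\<lambda>j. (a j ^ 2 * r j powr (- p)) powr (1 / (2 - p)))
                       (\<lambda>j. (r j / a j) powr (2 * p / (2 - p)))"
      and wb: "weak_norm_pow t (\<lambda>j. (a j ^ 2 * r j powr (- p)) powr (1 / (2 - p)))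
                     (\<lambda>j. (r j / a j) powr (2 * p / (2 - p))) x \<le> ennreal (\<rho> powr t)"
      and hg: "norm (g - A x) \<le> \<delta>" and al: "\<alpha> > 0"
      and hxh: "xh \<in> tikhonov_minimizers A p r \<alpha> g"
      and hcase: "(c\<^sub>l * \<rho> powr (- t * (2 - p) / (2 - t)) * \<delta> powr (2 * (2 - p) / (2 - t)) \<le> \<alpha> \<and>
       \<alpha> \<le> c\<^sub>r * \<rho> powr (- t * (2 - p) / (2 - t)) * \<delta> powr (2 * (2 - p) / (2 - t)))
      \<or> (c\<^sub>D * \<delta> \<le> norm (g - A xh) \<and> norm (g - A xh) \<le> C\<^sub>D * \<delta>)"
    show "lp_norm p r (\<lambda>j. x j - xh j)
       \<le> Cst powr (1 / p) * \<rho> powr (t * (2 - p) / (p * (2 - t))) * \<delta> powr (2 * (p - t) / (p * (2 - t)))"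
    proof -
    define \<mu> where "\<mu> = (\<lambda>j. (a j ^ 2 * r j powr (- p)) powr (1 / (2 - p)))"
    define \<nu> where "\<nu> = (\<lambda>j. (r j / a j) powr (2 * p / (2 - p)))"
    define h where "h = (\<lambda>j. \<mu> j * \<bar>x j\<bar>)"
    define \<tau> where "\<tau> = \<delta> powr (2 / (2 - t)) * \<rho> powr (- t / (2 - t))"
    note sc = tau_pos[OF rho dl p(1) p(2) t0 t(2) \<tau>_def] sc_a[OF rho dl p(1) p(2) t0 t(2) \<tau>_def]
      sc_b[OF rho dl p(1) p(2) t0 t(2) \<tau>_def] sc_c[OF rho dl p(1) p(2) t0 t(2) \<tau>_def]
      sc_d[OF rho dl p(1) p(2) t0 t(2) \<tau>_def] sc_e[OF rho dl p(1) p(2) t0 t(2) \<tau>_def]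
      sc_f[OF rho dl p(1) p(2) t0 t(2) \<tau>_def]
    have tau: "\<tau> > 0" by (rule sc(1))
    define \<epsilon> where "\<epsilon> = \<tau> powr (2 - p)"
    define T where "T = \<rho> powr t * \<tau> powr (p - t)"
    have eps: "\<epsilon> > 0" unfolding \<epsilon>_def using tau by simp
    have T: "T > 0" unfolding T_def using tau rho by simp
    have nuj: "\<nu> j = (r j / a j) powr (2 * p / (2 - p))" for j by (simp add: \<nu>_def)
    have muj: "\<mu> j = (a j ^ 2 * r j powr (- p)) powr (1 / (2 - p))" for j by (simp add: \<mu>_def)
    have hj: "h j = \<mu> j * \<bar>x j\<bar>" for j by (simp add: h_def)
    have nu0: "\<nu> j \<ge> 0" for j by (simp add: \<nu>_def)
    have h0: "h j \<ge> 0" for j by (simp add: h_def \<mu>_def)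
    have wb': "weak_norm_pow t \<mu> \<nu> x \<le> ennreal (\<rho> powr t)" using wb unfolding \<mu>_def \<nu>_def .
    have W: "\<And>\<tau>' F. \<tau>' > 0 \<Longrightarrow> finite F \<Longrightarrow> (\<Sum>j\<in>F. if h j > \<tau>' then \<nu> j else 0) \<le> \<rho> powr t * \<tau>' powr (-t)"
      unfolding h_def by (rule weak_finite[OF nu0 wb'])
    note P1 = pt1[OF a_pos r_pos p(1) p(2) tau nuj muj hj]
    note P2 = pt2[OF a_pos r_pos p(1) p(2) tau nuj muj hj]
    note P3 = pt3[OF a_pos r_pos p(1) p(2) tau nuj muj hj]
    note P4 = pt4[OF a_pos r_pos p(1) p(2) tau nuj muj hj]
    note P5 = pt5[OF a_pos r_pos p(1) p(2) tau nuj muj hj]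
    have hxh_mem: "xh \<in> lp_space p r" and hmin: "\<And>z. z \<in> lp_space p r \<Longrightarrow>
        (1 / (2 * \<alpha>)) * (norm (g - A xh))\<^sup>2 + (1 / p) * (lp_norm p r xh) powr p
        \<le> (1 / (2 * \<alpha>)) * (norm (g - A z))\<^sup>2 + (1 / p) * (lp_norm p r z) powr p"
      using hxh unfolding tikhonov_minimizers_def by auto
    have x2: "x \<in> lp_space 2 a" by (rule lp_p_to_2[OF a_pos r_pos K p hx])
    have xh2: "xh \<in> lp_space 2 a" by (rule lp_p_to_2[OF a_pos r_pos K p hxh_mem])
    have fun_eq: "(\<lambda>j. x j + -1 * xh j) = (\<lambda>j. x j - xh j)" by auto
    have e2: "(\<lambda>j. x j - xh j) \<in> lp_space 2 a"
      using lp_diff[OF a_pos _ x2 xh2, of "-1"] fun_eq by simp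
    have ep: "(\<lambda>j. x j - xh j) \<in> lp_space p r"
      using lp_diff[OF r_pos _ hx hxh_mem, of "-1"] fun_eq p by simp
    have zero2: "(\<lambda>j. 0::real) \<in> lp_space 2 a" unfolding lp_space_def by simp
    have mxh2: "(\<lambda>j. -1 * xh j) \<in> lp_space 2 a"
      using lp_diff[OF a_pos _ zero2 xh2, of "-1"] by simp
    have Ae: "A (\<lambda>j. x j - xh j) = A x - A xh"
    proof -
      have "A (\<lambda>j. x j + -1 * xh j) = A x + A (\<lambda>j. -1 * xh j)" by (rule A_add[OF x2 mxh2])
      also have "A (\<lambda>j. -1 * xh j) = (-1) *\<^sub>R A xh" by (rule A_scale[OF xh2])
      finally show ?thesis using fun_eq by simp
    qed
    define res where "res = norm (g - A xh)"
    have res0: "res \<ge> 0" unfolding res_def by simp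
    have nAe: "norm (A (\<lambda>j. x j - xh j)) \<le> \<delta> + res"
    proof -
      have "A x - A xh = (g - A xh) - (g - A x)" by simp
      then have "norm (A x - A xh) \<le> norm (g - A xh) + norm (g - A x)" by (metis norm_triangle_ineq4)
      then show ?thesis using Ae hg unfolding res_def by simp
    qed
    have M0: "M > 0" using M_ge by simp
    have lpE: "lp_norm 2 a (\<lambda>j. x j - xh j) \<le> M * (\<delta> + res)"
    proof -
      have "(1 / M) * lp_norm 2 a (\<lambda>j. x j - xh j) \<le> \<delta> + res" using A_lower[OF e2] nAe by linarith
      then show ?thesis using M0 by (simp add: field_simps)
    qed
    define E2 where "E2 = (\<Sum>\<^sub>\<infinity>j. (a j * \<bar>x j - xh j\<bar>) powr 2)"
    have lp0: "lp_norm 2 a (\<lambda>j. x j - xh j) \<ge> 0" unfolding lp_norm_def by simp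
    have "E2 = (lp_norm 2 a (\<lambda>j. x j - xh j)) powr 2" unfolding E2_def using lp_norm_powr[of 2 a "\<lambda>j. x j - xh j"] by simp
    then have E2eq: "E2 = (lp_norm 2 a (\<lambda>j. x j - xh j))^2" using lp0 by simp
    have hE: "E2 \<le> M^2 * (\<delta> + res)^2"
    proof -
      have "(lp_norm 2 a (\<lambda>j. x j - xh j))^2 \<le> (M * (\<delta> + res))^2" using lpE lp0 by (intro power_mono) auto
      then show ?thesis using E2eq by (simp add: power_mult_distrib)
    qed

    define fq where "fq = (\<lambda>j. (r j * \<bar>x j\<bar>) powr p)"
    define fv where "fv = (\<lambda>j. (r j * \<bar>xh j\<bar>) powr p)"
    define fre where "fre = (\<lambda>j. (r j * \<bar>x j - xh j\<bar>) powr p)"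
    define fae where "fae = (\<lambda>j. (a j * \<bar>x j - xh j\<bar>) powr 2)"
    define fPs where "fPs = (\<lambda>j. if h j \<le> \<tau> then (r j * \<bar>x j - xh j\<bar>) powr p else 0)"
    define fPb where "fPb = (\<lambda>j. if \<tau> < h j then (r j * \<bar>x j - xh j\<bar>) powr p else 0)"
    define fS where "fS = (\<lambda>j. if h j \<le> \<tau> then (r j * \<bar>x j\<bar>) powr p else 0)"
    define fB where "fB = (\<lambda>j. if \<tau> < h j then \<nu> j * h j powr (2 * p - 2) else 0)"
    define fN where "fN = (\<lambda>j. if \<tau> < h j then \<nu> j else 0)"
    have s_q: "fq summable_on UNIV" using hx unfolding lp_space_def fq_def by simp
    have s_v: "fv summable_on UNIV" using hxh_mem unfolding lp_space_def fv_def by simp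
    have s_re: "fre summable_on UNIV" using ep unfolding lp_space_def fre_def by simp
    have s_ae: "fae summable_on UNIV" using e2 unfolding lp_space_def fae_def by simp
    have s_Ps: "fPs summable_on UNIV"
      by (rule summable_on_comparison_test[OF s_re]) (auto simp: fPs_def fre_def)
    have s_Pb: "fPb summable_on UNIV"
      by (rule summable_on_comparison_test[OF s_re]) (auto simp: fPb_def fre_def)
    have s_S: "fS summable_on UNIV"
      by (rule summable_on_comparison_test[OF s_q]) (auto simp: fS_def fq_def)
    have s_B: "fB summable_on UNIV"
    proof (rule summable_on_comparison_test[OF summable_on_cmult_right[OF s_q, of "\<tau> powr (p - 2)"]])
      show "fB j \<le> \<tau> powr (p - 2) * fq j" for j unfolding fB_def fq_def by (rule P4)
      show "0 \<le> fB j" for j unfolding fB_def using nu0 by simp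
    qed
    have s_N: "fN summable_on UNIV"
    proof (rule summable_on_comparison_test[OF summable_on_cmult_right[OF s_q, of "\<tau> powr (- p)"]])
      show "fN j \<le> \<tau> powr (- p) * fq j" for j unfolding fN_def fq_def by (rule P5)
      show "0 \<le> fN j" for j unfolding fN_def using nu0 by simp
    qed
    define A1 where "A1 = infsum fq UNIV"
    define A2 where "A2 = infsum fv UNIV"
    define Ps where "Ps = infsum fPs UNIV"
    define Pb where "Pb = infsum fPb UNIV"
    define S where "S = infsum fS UNIV"
    define B where "B = infsum fB UNIV"
    define N where "N = infsum fN UNIV"
    have E2': "E2 = infsum fae UNIV" unfolding E2_def fae_def by simp
    have Ps0: "Ps \<ge> 0" unfolding Ps_def fPs_def by (intro infsum_nonneg) auto
    have summed: "2 powr (-p) * Ps + A1 \<le> A2 + 2 * S + p * l / 2 * B + p / (2 * l) * E2" if l: "l > 0" for l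
    proof -
      have "infsum (\<lambda>j. 2 powr (-p) * fPs j + fq j) UNIV
          \<le> infsum (\<lambda>j. fv j + 2 * fS j + p * l / 2 * fB j + p / (2 * l) * fae j) UNIV"
      proof (rule infsum_mono)
        show "(\<lambda>j. 2 powr (-p) * fPs j + fq j) summable_on UNIV"
          by (intro summable_on_add summable_on_cmult_right s_Ps s_q)
        show "(\<lambda>j. fv j + 2 * fS j + p * l / 2 * fB j + p / (2 * l) * fae j) summable_on UNIV"
          by (intro summable_on_add summable_on_cmult_right s_v s_S s_B s_ae)
        show "2 powr (-p) * fPs j + fq j \<le> fv j + 2 * fS j + p * l / 2 * fB j + p / (2 * l) * fae j" for j
          unfolding fPs_def fq_def fv_def fS_def fB_def fae_def by (rule P2[OF l])
      qed
      also have "infsum (\<lambda>j. 2 powr (-p) * fPs j + fq j) UNIV = 2 powr (-p) * Ps + A1"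
        unfolding Ps_def A1_def
        by (subst infsum_add) (auto intro!: summable_on_cmult_right s_Ps s_q simp: infsum_cmult_right s_Ps)
      also have "infsum (\<lambda>j. fv j + 2 * fS j + p * l / 2 * fB j + p / (2 * l) * fae j) UNIV
          = A2 + 2 * S + p * l / 2 * B + p / (2 * l) * E2"
        unfolding A2_def S_def B_def E2'
        by (subst infsum_add infsum_cmult_right, (intro summable_on_add summable_on_cmult_right s_v s_S s_B s_ae)+)+ simp
      finally show ?thesis .
    qed

    have mindiff: "A2 - A1 \<le> p * (\<delta>^2 - res^2) / (2 * \<alpha>)"
    proof -
      have m: "(1 / (2 * \<alpha>)) * res^2 + (1 / p) * A2 \<le> (1 / (2 * \<alpha>)) * (norm (g - A x))\<^sup>2 + (1 / p) * A1"
        using hmin[OF hx] p unfolding res_def A1_def A2_def fq_def fv_def by (simp add: lp_norm_powr)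
      have "(norm (g - A x))\<^sup>2 \<le> \<delta>^2" using hg by (intro power_mono) auto
      then have "(1 / (2 * \<alpha>)) * (norm (g - A x))\<^sup>2 \<le> (1 / (2 * \<alpha>)) * \<delta>^2" using al by (intro mult_left_mono) auto
      moreover have "(1 / p) * (A2 - A1) = (1 / p) * A2 - (1 / p) * A1" by (simp only: right_diff_distrib)
      moreover have "(1 / (2 * \<alpha>)) * (\<delta>^2 - res^2) = (1 / (2 * \<alpha>)) * \<delta>^2 - (1 / (2 * \<alpha>)) * res^2"
        by (simp only: right_diff_distrib)
      ultimately have "(1 / p) * (A2 - A1) \<le> (1 / (2 * \<alpha>)) * (\<delta>^2 - res^2)" using m by linarith
      then have "p * ((1 / p) * (A2 - A1)) \<le> p * ((1 / (2 * \<alpha>)) * (\<delta>^2 - res^2))" using p by (intro mult_left_mono) auto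
      then show ?thesis using p by simp
    qed
    have hmain: "2 powr (-p) * Ps \<le> p * (\<delta>^2 - res^2) / (2 * \<alpha>) + 2 * S + p * l / 2 * B + p / (2 * l) * E2"
      if l: "l > 0" for l using summed[OF l] mindiff by linarith
    have hS: "S \<le> c1 * T"
    proof -
      have "S \<le> 2 powr t / (1 - 2 powr (t - p)) * \<rho> powr t * \<tau> powr (p - t)"
        unfolding S_def
      proof (rule infsum_le_finite_sums[OF s_S])
        fix F :: "'j set" assume F: "finite F"
        have "sum fS F = (\<Sum>j\<in>F. if h j \<le> \<tau> then \<nu> j * h j powr p else 0)"
          unfolding fS_def using P1 by (intro sum.cong) auto
        also have "\<dots> \<le> 2 powr t / (1 - 2 powr (t - p)) * \<rho> powr t * \<tau> powr (p - t)"
          by (rule dyadic_small[OF h0 nu0 tau t0 t(2) W F])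
        finally show "sum fS F \<le> 2 powr t / (1 - 2 powr (t - p)) * \<rho> powr t * \<tau> powr (p - t)" .
      qed
      then show ?thesis unfolding c1_def T_def by (simp add: mult.assoc)
    qed
    have hB: "B \<le> c2 * T / \<epsilon>"
    proof -
      have "B \<le> 2 powr (2 * p - 2) / (1 - 2 powr (2 * p - 2 - t)) * \<rho> powr t * \<tau> powr (2 * p - 2 - t)"
        unfolding B_def
      proof (rule infsum_le_finite_sums[OF s_B])
        fix F :: "'j set" assume F: "finite F"
        show "sum fB F \<le> 2 powr (2 * p - 2) / (1 - 2 powr (2 * p - 2 - t)) * \<rho> powr t * \<tau> powr (2 * p - 2 - t)"
          unfolding fB_def by (rule dyadic_big[OF h0 nu0 tau beta W F])
      qed
      then have "B \<le> c2 * (\<rho> powr t * \<tau> powr (2 * p - 2 - t))" unfolding c2_def by (simp add: mult.assoc)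
      also have "\<rho> powr t * \<tau> powr (2 * p - 2 - t) = T / \<epsilon>" unfolding T_def \<epsilon>_def by (rule sc(3))
      finally show ?thesis by simp
    qed
    have hN: "N \<le> \<rho> powr t * \<tau> powr (- t)"
      unfolding N_def
    proof (rule infsum_le_finite_sums[OF s_N])
      fix F :: "'j set" assume F: "finite F"
      show "sum fN F \<le> \<rho> powr t * \<tau> powr (- t)" unfolding fN_def by (rule W[OF tau F])
    qed
    have hPb: "Pb \<le> p / 2 * E2 / \<epsilon> + (2 - p) / 2 * T"
    proof -
      have "Pb \<le> infsum (\<lambda>j. p / 2 * \<tau> powr (p - 2) * fae j + (2 - p) / 2 * \<tau> powr p * fN j) UNIV"
        unfolding Pb_def
      proof (rule infsum_mono[OF s_Pb])
        show "(\<lambda>j. p / 2 * \<tau> powr (p - 2) * fae j + (2 - p) / 2 * \<tau> powr p * fN j) summable_on UNIV"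
          by (intro summable_on_add summable_on_cmult_right s_ae s_N)
        show "fPb j \<le> p / 2 * \<tau> powr (p - 2) * fae j + (2 - p) / 2 * \<tau> powr p * fN j" for j
          unfolding fPb_def fae_def fN_def by (rule P3)
      qed
      also have "\<dots> = p / 2 * \<tau> powr (p - 2) * E2 + (2 - p) / 2 * \<tau> powr p * N"
        unfolding E2' N_def
        by (subst infsum_add infsum_cmult_right, (intro summable_on_add summable_on_cmult_right s_ae s_N)+)+ simp
      finally have b1: "Pb \<le> p / 2 * \<tau> powr (p - 2) * E2 + (2 - p) / 2 * \<tau> powr p * N" .
      have b2: "(2 - p) / 2 * \<tau> powr p * N \<le> (2 - p) / 2 * (\<tau> powr p * (\<rho> powr t * \<tau> powr (- t)))"
        using hN p by (simp add: mult.assoc mult_left_mono)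
      have b3: "\<tau> powr p * (\<rho> powr t * \<tau> powr (- t)) = T" unfolding T_def by (rule sc(5))
      have b4: "p / 2 * \<tau> powr (p - 2) * E2 = p / 2 * E2 / \<epsilon>" unfolding \<epsilon>_def using sc(4) by simp
      show ?thesis using b1 b2 b3 b4 by simp
    qed
    have hd: "\<delta>^2 = T * \<epsilon>" unfolding T_def \<epsilon>_def by (rule sc(2))
    have hcase': "(c\<^sub>l * \<epsilon> \<le> \<alpha> \<and> \<alpha> \<le> c\<^sub>r * \<epsilon>) \<or> (c\<^sub>D * \<delta> \<le> res \<and> res \<le> C\<^sub>D * \<delta>)"
      using hcase sc(6) unfolding \<epsilon>_def res_def by (simp add: mult.assoc)
    have fin: "Ps + Pb \<le> Cst * T"
      unfolding Cst_def
      by (rule final_arith[OF T eps dl res0 al M_ge p c1 c2 c cD hd hE Ps0 hS hB hPb hmain hcase'])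
    have "lp_norm p r (\<lambda>j. x j - xh j) = (Ps + Pb) powr (1 / p)"
    proof -
      have "infsum fre UNIV = Ps + Pb"
        unfolding Ps_def Pb_def
        by (subst infsum_add[OF s_Ps s_Pb, symmetric]) (auto intro!: infsum_cong simp: fre_def fPs_def fPb_def)
      then show ?thesis unfolding lp_norm_def fre_def by simp
    qed
    also have "\<dots> \<le> (Cst * T) powr (1 / p)" using fin Ps0 p hPb
      by (intro powr_mono2) (auto intro!: add_nonneg_nonneg infsum_nonneg simp: Pb_def fPb_def)
    also have "\<dots> = Cst powr (1 / p) * T powr (1 / p)" using Cst T by (simp add: powr_mult)
    also have "T powr (1 / p) = \<rho> powr (t * (2 - p) / (p * (2 - t))) * \<delta> powr (2 * (p - t) / (p * (2 - t)))"
      unfolding T_def by (rule sc(7))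
    finally show ?thesis by (simp add: mult.assoc)
    qed
  qed
qed


end
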